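(* Let $S$ and $Z$ be finite nonempty alphabets with $\#Z\le\#S$, let $\tau:S\to Z$ be surjective, and let $\sigma_\tau:\Sigma\to\Sigma$ be the associated full zip shift map. Then $\sigma_\tau$ is transitive (there exists $x\in\Sigma$ whose forward orbit $\{\sigma_\tau^n(x):n\ge0\}$ is dense in $\Sigma$) and pre-transitive (there exists $x\in\Sigma$ such that $\bigcup_{n\ge0}\sigma_\tau^{-n}(x)$ is dense in $\Sigma$).
   Context: The zip shift space $\Sigma=\Sigma_{Z,S}$ is the set of bi-infinite sequences $x=(x_i)_{i\in\mathbb{Z}}$ with $x_i\in S$ for $i\ge0$ and $x_i\in Z$ for $i<0$, with metric $d(x,y)=2^{-M(x,y)}$, $M(x,y)=\min\{|i|:x_i\neq y_i\}$. The zip shift map is defined by $(\sigma_\tau x)_i=x_{i+1}$ for $i\neq-1$ and $(\sigma_\tau x)_{-1}=\tau(x_0)$. Here $\sigma_\tau^{-n}(x)$ denotes the set of all $y\in\Sigma$ with $\sigma_\tau^n(y)=x$. *)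

theory Defs
  imports "HOL-Analysis.Analysis"
begin

definition zip_space :: "'a set \<Rightarrow> 'a set \<Rightarrow> (int \<Rightarrow> 'a) set" where
  "zip_space Z S = {x. (\<forall>i\<ge>0. x i \<in> S) \<and> (\<forall>i<0. x i \<in> Z)}"

definition zip_M :: "(int \<Rightarrow> 'a) \<Rightarrow> (int \<Rightarrow> 'a) \<Rightarrow> nat" where
  "zip_M x y = (LEAST n. \<exists>i. nat \<bar>i\<bar> = n \<and> x i \<noteq> y i)"

definition zip_dist :: "(int \<Rightarrow> 'a) \<Rightarrow> (int \<Rightarrow> 'a) \<Rightarrow> real" where
  "zip_dist x y = (if x = y then 0 else (1/2) ^ zip_M x y)"

definition zip_shift :: "('a \<Rightarrow> 'a) \<Rightarrow> (int \<Rightarrow> 'a) \<Rightarrow> (int \<Rightarrow> 'a)" where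
  "zip_shift \<tau> x = (\<lambda>i. if i = -1 then \<tau> (x 0) else x (i + 1))"

definition zip_dense :: "'a set \<Rightarrow> 'a set \<Rightarrow> (int \<Rightarrow> 'a) set \<Rightarrow> bool" where
  "zip_dense Z S A \<longleftrightarrow> A \<subseteq> zip_space Z S \<and>
     (\<forall>x\<in>zip_space Z S. \<forall>e>0. \<exists>y\<in>A. zip_dist x y < e)"

definition zip_transitive :: "'a set \<Rightarrow> 'a set \<Rightarrow> ('a \<Rightarrow> 'a) \<Rightarrow> bool" where
  "zip_transitive Z S \<tau> \<longleftrightarrow>
     (\<exists>x\<in>zip_space Z S. zip_dense Z S {(zip_shift \<tau> ^^ n) x | n. True})"

definition zip_pretransitive :: "'a set \<Rightarrow> 'a set \<Rightarrow> ('a \<Rightarrow> 'a) \<Rightarrow> bool" where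
  "zip_pretransitive Z S \<tau> \<longleftrightarrow>
     (\<exists>x\<in>zip_space Z S. zip_dense Z S
        (\<Union>n. {y \<in> zip_space Z S. (zip_shift \<tau> ^^ n) y = x}))"

end

theory Submission
  imports Defs
begin

lemma universal_seq:
  fixes A :: "'a set"
  assumes "A \<noteq> {}" "countable A"
  shows "\<exists>u::nat\<Rightarrow>'a. (\<forall>k. u k \<in> A) \<and>
           (\<forall>w\<in>lists A. \<forall>m. \<exists>p\<ge>m. \<forall>l<length w. u (p+l) = w!l)"
proof -
  obtain a where a: "a \<in> A" using assms(1) by blast
  have ne: "lists A \<noteq> {}" by auto
  have cl: "countable (lists A)" using assms(2) by simp
  define f where "f = from_nat_into (lists A)"
  have rf: "range f = lists A" unfolding f_def using ne cl by simp
  define g where "g k = a # f k" for k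
  define L where "L m = concat (map g [0..<m])" for m
  have gA: "set (g k) \<subseteq> A" for k using rf a unfolding g_def by (auto simp: in_lists_conv_set)
  have LA: "set (L m) \<subseteq> A" for m using gA unfolding L_def by auto
  have Llen: "length (L m) \<ge> m" for m
    by (induction m) (auto simp: L_def g_def)
  have LSuc: "L (Suc k) = L k @ g k" for k by (simp add: L_def)
  have Ladd: "\<exists>r. L (m + d) = L m @ r" for m d
    by (induction d) (auto simp: LSuc)
  define u where "u k = L (Suc k) ! k" for k
  have uL: "u k = L m ! k" if "k < length (L m)" for k m
  proof -
    have k1: "k < length (L (Suc k))" using Llen[of "Suc k"] by simp
    have pre: "\<And>m1 m2 i. m1 \<le> m2 \<Longrightarrow> i < length (L m1) \<Longrightarrow> L m2 ! i = L m1 ! i"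
    proof -
      fix m1 m2 i assume "m1 \<le> m2" "i < length (L m1)"
      then obtain d where "m2 = m1 + d" using le_Suc_ex by blast
      with Ladd obtain r where "L m2 = L m1 @ r" by blast
      thus "L m2 ! i = L m1 ! i" using \<open>i < length (L m1)\<close> by (simp add: nth_append)
    qed
    show ?thesis
    proof (cases "Suc k \<le> m")
      case True thus ?thesis using pre[OF True k1] u_def by simp
    next
      case False thus ?thesis using pre[of m "Suc k" k] that u_def by simp
    qed
  qed
  have "\<forall>k. u k \<in> A"
  proof
    fix k
    have "k < length (L (Suc k))" using Llen[of "Suc k"] by simp
    thus "u k \<in> A" using LA[of "Suc k"] unfolding u_def by (meson nth_mem subsetD)
  qed
  moreover have "\<exists>p\<ge>m. \<forall>l<length w. u (p+l) = w!l" if w: "w \<in> lists A" for w m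
  proof -
    have "replicate m a @ w \<in> lists A" using w a by auto
    then obtain k where k: "f k = replicate m a @ w" using rf by (metis rangeE)
    define q where "q = length (L k) + 1 + m"
    have "u (q + l) = w ! l" if "l < length w" for l
    proof -
      have eq: "L (Suc k) = L k @ (a # replicate m a @ w)" using LSuc k g_def by simp
      have "q + l < length (L (Suc k))" using that eq q_def by simp
      hence "u (q+l) = L (Suc k) ! (q + l)" using uL by blast
      also have "\<dots> = w ! l" unfolding eq q_def by (simp add: nth_append)
      finally show ?thesis .
    qed
    moreover have "q \<ge> m" by (simp add: q_def)
    ultimately show ?thesis by blast
  qed
  ultimately show ?thesis by blast
qed

lemma shift_pow:
  "(zip_shift \<tau> ^^ n) x i = (if i < 0 \<and> 0 \<le> i + int n then \<tau> (x (i + int n)) else x (i + int n))"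
proof (induction n arbitrary: i)
  case 0 thus ?case by auto
next
  case (Suc n)
  have "(zip_shift \<tau> ^^ Suc n) x i = zip_shift \<tau> ((zip_shift \<tau> ^^ n) x) i" by simp
  also have "\<dots> = (if i = -1 then \<tau> ((zip_shift \<tau> ^^ n) x 0) else (zip_shift \<tau> ^^ n) x (i+1))"
    by (simp only: zip_shift_def)
  finally show ?case
    by (simp add: Suc.IH algebra_simps)
qed

lemma shift_pow_space:
  assumes "x \<in> zip_space Z S" "\<tau> ` S = Z"
  shows "(zip_shift \<tau> ^^ n) x \<in> zip_space Z S"
  using assms unfolding zip_space_def by (auto simp: shift_pow)

lemma dist_close:
  assumes "\<And>i. \<bar>i\<bar> \<le> int N \<Longrightarrow> x i = y i"
  shows "zip_dist x y \<le> (1/2) ^ (Suc N)"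
proof (cases "x = y")
  case True thus ?thesis by (simp add: zip_dist_def)
next
  case False
  then obtain i0 where "x i0 \<noteq> y i0" by blast
  hence ex: "\<exists>n i. nat \<bar>i\<bar> = n \<and> x i \<noteq> y i" by blast
  from LeastI_ex[OF ex] obtain i where
    i: "nat \<bar>i\<bar> = zip_M x y" "x i \<noteq> y i" unfolding zip_M_def by blast
  have "\<not> \<bar>i\<bar> \<le> int N" using assms i(2) by blast
  hence "zip_M x y \<ge> Suc N" using i(1) by linarith
  hence "(1/2::real) ^ zip_M x y \<le> (1/2) ^ Suc N" by (rule power_decreasing) auto
  thus ?thesis using False by (simp add: zip_dist_def)
qed

lemma small_N: "(e::real) > 0 \<Longrightarrow> \<exists>N. (1/2::real) ^ Suc N < e"
proof -
  assume "e > 0"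
  then obtain N where "(1/2::real) ^ N < e" using real_arch_pow_inv[of e "1/2"] by auto
  moreover have "(1/2::real) ^ Suc N \<le> (1/2) ^ N" by (rule power_decreasing) auto
  ultimately show ?thesis by (meson order_le_less_trans)
qed

lemma close_dense:
  assumes "A \<subseteq> zip_space Z S"
    and "\<And>t N. t \<in> zip_space Z S \<Longrightarrow> \<exists>y\<in>A. \<forall>i. \<bar>i\<bar> \<le> int N \<longrightarrow> t i = y i"
  shows "zip_dense Z S A"
  unfolding zip_dense_def
proof (intro conjI assms(1) ballI allI impI)
  fix t e assume t: "t \<in> zip_space Z S" and e: "(e::real) > 0"
  obtain N where N: "(1/2::real) ^ Suc N < e" using small_N[OF e] by blast
  obtain y where y: "y \<in> A" "\<forall>i. \<bar>i\<bar> \<le> int N \<longrightarrow> t i = y i" using assms(2)[OF t] by blast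
  have "zip_dist t y \<le> (1/2) ^ Suc N" using y(2) by (intro dist_close) auto
  thus "\<exists>y\<in>A. zip_dist t y < e" using y(1) N by force
qed

theorem theorem2:
  fixes S Z :: "'a set" and \<tau> :: "'a \<Rightarrow> 'a"
  assumes "finite S" "S \<noteq> {}" "finite Z" "Z \<noteq> {}"
    and "card Z \<le> card S"
    and "\<tau> ` S = Z"
  shows "zip_transitive Z S \<tau> \<and> zip_pretransitive Z S \<tau>"
proof
  have tauS: "\<And>z. z \<in> Z \<Longrightarrow> \<exists>s\<in>S. \<tau> s = z" using assms(6) by blast
  show "zip_transitive Z S \<tau>"
  proof -
    obtain u where u: "\<forall>k. u k \<in> S" "\<forall>w\<in>lists S. \<forall>m. \<exists>p\<ge>m. \<forall>l<length w. u (p+l) = w!l"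
      using universal_seq[OF assms(2) countable_finite[OF assms(1)]] by blast
    obtain z0 where z0: "z0 \<in> Z" using assms(4) by blast
    define x where "x i = (if i < 0 then z0 else u (nat i))" for i
    have xs: "x \<in> zip_space Z S" using u(1) z0 by (simp add: zip_space_def x_def)
    have "zip_dense Z S {(zip_shift \<tau> ^^ n) x | n. True}"
    proof (rule close_dense)
      show "{(zip_shift \<tau> ^^ n) x | n. True} \<subseteq> zip_space Z S"
        using shift_pow_space[OF xs assms(6)] by blast
    next
      fix t N assume t: "t \<in> zip_space Z S"
      define pk where "pk z = (SOME s. s \<in> S \<and> \<tau> s = z)" for z
      have pk: "pk z \<in> S \<and> \<tau> (pk z) = z" if "z \<in> Z" for z
        unfolding pk_def using tauS[OF that] by (metis (mono_tags, lifting) someI)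
      define w where "w = map (\<lambda>j. if j < N then pk (t (int j - int N)) else t (int j - int N)) [0..<2*N+1]"
      have wS: "w \<in> lists S"
        using t pk unfolding w_def zip_space_def by auto
      obtain p where p: "p \<ge> N" "\<forall>l<length w. u (p+l) = w!l" using u(2) wS by blast
      define n where "n = p + N"
      have "\<forall>i. \<bar>i\<bar> \<le> int N \<longrightarrow> t i = (zip_shift \<tau> ^^ n) x i"
      proof (intro allI impI)
        fix i assume i: "\<bar>i\<bar> \<le> int N"
        define j where "j = nat (i + int N)"
        have ij: "i = int j - int N" "j < length w" using i unfolding j_def w_def by auto
        have xn: "x (i + int n) = w ! j"
          using p(2) ij unfolding x_def n_def by (auto simp: nat_add_distrib add.commute)
        show "t i = (zip_shift \<tau> ^^ n) x i"
        proof (cases "i < 0")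
          case True
          hence "j < N" using ij by simp
          hence "w ! j = pk (t i)" using ij unfolding w_def by (simp del: upt_Suc)
          moreover have "t i \<in> Z" using t True by (simp add: zip_space_def)
          ultimately show ?thesis using xn pk True i by (simp add: shift_pow n_def)
        next
          case False
          hence "\<not> j < N" using ij by simp
          hence "w ! j = t i" using ij unfolding w_def by (simp del: upt_Suc)
          thus ?thesis using xn False by (simp add: shift_pow)
        qed
      qed
      thus "\<exists>y\<in>{(zip_shift \<tau> ^^ n) x | n. True}. \<forall>i. \<bar>i\<bar> \<le> int N \<longrightarrow> t i = y i" by blast
    qed
    thus ?thesis unfolding zip_transitive_def using xs by blast
  qed
next
  show "zip_pretransitive Z S \<tau>"
  proof -
    have tauS: "\<And>z. z \<in> Z \<Longrightarrow> \<exists>s\<in>S. \<tau> s = z" using assms(6) by blast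
    obtain v where v: "\<forall>k. v k \<in> Z" "\<forall>w\<in>lists Z. \<forall>m. \<exists>p\<ge>m. \<forall>l<length w. v (p+l) = w!l"
      using universal_seq[OF assms(4) countable_finite[OF assms(3)]] by blast
    obtain s0 where s0: "s0 \<in> S" using assms(2) by blast
    define x where "x i = (if i < 0 then v (nat (- i - 1)) else s0)" for i
    have xs: "x \<in> zip_space Z S" using v(1) s0 by (simp add: zip_space_def x_def)
    define pk where "pk z = (SOME s. s \<in> S \<and> \<tau> s = z)" for z
    have pk: "pk z \<in> S \<and> \<tau> (pk z) = z" if "z \<in> Z" for z
      unfolding pk_def using tauS[OF that] by (metis (mono_tags, lifting) someI)
    define B where "B = (\<Union>n. {y \<in> zip_space Z S. (zip_shift \<tau> ^^ n) y = x})"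
    have "zip_dense Z S B"
    proof (rule close_dense)
      show "B \<subseteq> zip_space Z S" unfolding B_def by blast
    next
      fix t N assume t: "t \<in> zip_space Z S"
      have tS: "t j \<in> S" if "j \<ge> 0" for j using t that by (simp add: zip_space_def)
      have tZ: "t j \<in> Z" if "j < 0" for j using t that by (simp add: zip_space_def)
      define w where "w = map (\<lambda>l. if N < l then t (int N - int l) else \<tau> (t (int N - int l))) [0..<2*N+1]"
      have wZ: "w \<in> lists Z"
        using tS tZ assms(6) unfolding w_def by auto
      obtain p where p: "p \<ge> N+1" "\<forall>l<length w. v (p+l) = w!l" using v(2) wZ by blast
      define n where "n = p + N + 1"
      define y where "y j = (if j < 0 \<or> j \<ge> int n then x (j - int n)
          else if j \<le> int N then t j else pk (x (j - int n)))" for j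
      have xneg: "x (- int (p + l) - 1) = w ! l" if "l < 2*N+1" for l
      proof -
        have "nat (- (- int (p + l) - 1) - 1) = p + l" by simp
        thus ?thesis using p(2) that unfolding x_def w_def by simp
      qed
      have xZ: "x i \<in> Z" if "i < 0" for i using that v(1) by (simp add: x_def)
      have ys: "y \<in> zip_space Z S"
        unfolding zip_space_def
      proof (intro CollectI conjI allI impI)
        fix j :: int assume "j \<ge> 0"
        thus "y j \<in> S" using s0 tS pk v(1) by (simp add: y_def x_def)
      next
        fix j :: int assume "j < 0"
        thus "y j \<in> Z" using xZ by (simp add: y_def)
      qed
      have "(zip_shift \<tau> ^^ n) y = x"
      proof
        fix i
        show "(zip_shift \<tau> ^^ n) y i = x i"
        proof (cases "i < 0 \<and> 0 \<le> i + int n")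
          case False
          hence "(zip_shift \<tau> ^^ n) y i = y (i + int n)" by (simp only: shift_pow if_False)
          thus ?thesis using False by (auto simp: y_def)
        next
          case True
          define j where "j = i + int n"
          have j: "0 \<le> j" "j < int n" using True j_def by auto
          have "(zip_shift \<tau> ^^ n) y i = \<tau> (y j)" using True by (simp add: shift_pow j_def)
          also have "\<dots> = x i"
          proof (cases "j \<le> int N")
            case True
            define l where "l = N - nat j"
            have l: "l < 2*N+1" "\<not> N < l" "int N - int l = j" using True j unfolding l_def by auto
            have "i = - int (p + l) - 1" using j_def l n_def True j by simp
            hence "x i = \<tau> (t j)" using xneg[OF l(1)] l unfolding w_def by (simp del: upt_Suc)
            thus ?thesis using j True by (simp add: y_def)
          next
            case False
            hence "y j = pk (x i)" using j by (simp add: y_def j_def)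
            thus ?thesis using pk xZ \<open>i < 0 \<and> 0 \<le> i + int n\<close> by simp
          qed
          finally show ?thesis .
        qed
      qed
      hence yB: "y \<in> B" using ys unfolding B_def by blast
      have "\<forall>j. \<bar>j\<bar> \<le> int N \<longrightarrow> t j = y j"
      proof (intro allI impI)
        fix j :: int assume jN: "\<bar>j\<bar> \<le> int N"
        show "t j = y j"
        proof (cases "j < 0")
          case False
          thus ?thesis using jN by (simp add: y_def n_def)
        next
          case True
          define l where "l = N + nat (- j)"
          have l: "l < 2*N+1" "N < l" "int N - int l = j" using True jN unfolding l_def by auto
          have "j - int n = - int (p + l) - 1" using l n_def l_def True by simp
          hence "x (j - int n) = t j" using xneg[OF l(1)] l unfolding w_def by (simp del: upt_Suc)
          thus ?thesis using True by (simp add: y_def)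
        qed
      qed
      thus "\<exists>y\<in>B. \<forall>i. \<bar>i\<bar> \<le> int N \<longrightarrow> t i = y i" using yB by blast
    qed
    thus ?thesis unfolding zip_pretransitive_def B_def using xs by blast
  qed
qed

end
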